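(* Let $(V,\mathcal H,\iota,W)$ be an abelian functional theory with set of weights $\Omega$, let $F$ be a facet of $\mathrm{conv}(\Omega)$, and consider the restricted functional theory $(V,\mathcal H_F,\iota_F,\Pi_FW\Pi_F^\dagger)$ on $F$. Then: (1) the restricted theory is abelian; (2) $\Omega_F:=\Omega\cap F$ is its set of weights; (3) $\dim\iota_F^{-1}(\mathrm{span}\{\mathbb 1_F\})=\dim\iota^{-1}(\mathrm{span}\{\mathbb 1\})+1$; (4) for every pure state $\Gamma$ on $\mathcal H$, $\iota^*(\Gamma)\in F$ iff $\Gamma\in\mathcal P_F$; (5) for every density operator $\Gamma$ on $\mathcal H$, $\iota^*(\Gamma)\in F$ iff $\Gamma\in\mathcal E_F$; (6) $\mathcal F_p^{(F)}=\mathcal F_p|_F$; (7) $\mathcal F_e^{(F)}=\mathcal F_e|_F$.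
   Context: A generalized functional theory is a tuple $(V,\mathcal H,\iota,W)$ with $V$ a finite-dimensional real vector space, $\mathcal H$ a finite-dimensional complex Hilbert space, $\iota:V\to i\mathfrak u(\mathcal H)$ linear into the Hermitian operators, $W$ Hermitian; it is abelian if all $\iota(v)$ commute. States are regarded as linear functionals via the trace and $\iota^*$ is the dual map. Weights: $\alpha\in V^*$ with $\mathcal H_\alpha:=\{\psi:\iota(v)\psi=\langle\alpha,v\rangle\psi\ \forall v\}\ne0$; $\Omega$ is the set of weights, and $\mathrm{conv}(\Omega)$ is a convex polytope. For a facet $F$, $\mathcal H_F=\bigoplus_{\omega\in\Omega\cap F}\mathcal H_\omega$, $\Pi_F:\mathcal H\to\mathcal H_F$ the orthogonal projection, $\iota_F(v)=\Pi_F\iota(v)\Pi_F^\dagger$, $\mathbb 1_F$ the identity on $\mathcal H_F$; $\mathcal P_F,\mathcal E_F$ are the pure states and density operators on $\mathcal H_F$ (viewed as states on $\mathcal H$). For any theory, $\mathcal F_p(\rho)=\min\{\mathrm{Tr}(\Gamma W):\Gamma\text{ pure},\iota^*(\Gamma)=\rho\}$ and $\mathcal F_e(\rho)=\min\{\mathrm{Tr}(\Gamma W):\Gamma\text{ density operator},\iota^*(\Gamma)=\rho\}$; $\mathcal F_p^{(F)},\mathcal F_e^{(F)}$ denote those of the restricted theory. *)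

theory Defs
  imports "HOL-Analysis.Analysis"
begin

text \<open>Finite-dimensional complex Hilbert space H = complex^'n (standard inner product),
  operators on H = complex matrices complex^'n^'n.\<close>

definition cadj :: "complex^'n^'m \<Rightarrow> complex^'m^'n" where
  "cadj A = (\<chi> i j. cnj (A $ j $ i))"

definition herm :: "complex^'n^'n \<Rightarrow> bool" where
  "herm A \<longleftrightarrow> cadj A = A"

definition cnorm2 :: "complex^'n \<Rightarrow> real" where
  "cnorm2 x = (\<Sum>i\<in>UNIV. (cmod (x $ i))^2)"

definition qform :: "complex^'n^'n \<Rightarrow> complex^'n \<Rightarrow> complex" where
  "qform A x = (\<Sum>i\<in>UNIV. \<Sum>j\<in>UNIV. cnj (x $ i) * A $ i $ j * x $ j)"

definition ketbra :: "complex^'n \<Rightarrow> complex^'n^'n" where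
  "ketbra x = (\<chi> i j. x $ i * cnj (x $ j))"

definition pure_state :: "complex^'n^'n \<Rightarrow> bool" where
  "pure_state G \<longleftrightarrow> (\<exists>x. cnorm2 x = 1 \<and> G = ketbra x)"

definition density_op :: "complex^'n^'n \<Rightarrow> bool" where
  "density_op G \<longleftrightarrow> herm G \<and> (\<forall>x. qform G x \<in> \<real> \<and> 0 \<le> Re (qform G x)) \<and> trace G = 1"

text \<open>A generalized functional theory (V, H, iota, W): V = 'v (finite-dim. real space,
  its dual identified with 'v via the inner product), H = complex^'n,
  iota real-linear into Hermitian operators, W Hermitian.\<close>

definition functional_theory :: "('v::euclidean_space \<Rightarrow> complex^'n^'n) \<Rightarrow> complex^'n^'n \<Rightarrow> bool" where
  "functional_theory \<iota> W \<longleftrightarrow> linear \<iota> \<and> (\<forall>v. herm (\<iota> v)) \<and> herm W"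

definition abelian :: "('v::euclidean_space \<Rightarrow> complex^'n^'n) \<Rightarrow> bool" where
  "abelian \<iota> \<longleftrightarrow> (\<forall>v w. \<iota> v ** \<iota> w = \<iota> w ** \<iota> v)"

text \<open>dual map: <iota^*(G), v> = Tr(G iota(v))\<close>
definition iota_star :: "('v::euclidean_space \<Rightarrow> complex^'n^'n) \<Rightarrow> complex^'n^'n \<Rightarrow> 'v" where
  "iota_star \<iota> G = (\<Sum>b\<in>Basis. Re (trace (G ** \<iota> b)) *\<^sub>R b)"

definition weight_space :: "('v::euclidean_space \<Rightarrow> complex^'n^'n) \<Rightarrow> 'v \<Rightarrow> (complex^'n) set" where
  "weight_space \<iota> \<alpha> = {\<psi>. \<forall>v. \<iota> v *v \<psi> = complex_of_real (\<alpha> \<bullet> v) *s \<psi>}"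

definition weights :: "('v::euclidean_space \<Rightarrow> complex^'n^'n) \<Rightarrow> 'v set" where
  "weights \<iota> = {\<alpha>. weight_space \<iota> \<alpha> \<noteq> {0}}"

definition facet_space :: "('v::euclidean_space \<Rightarrow> complex^'n^'n) \<Rightarrow> 'v set \<Rightarrow> (complex^'n) set" where
  "facet_space \<iota> F = {(\<Sum>\<omega>\<in>weights \<iota> \<inter> F. \<psi> \<omega>) | \<psi>. \<forall>\<omega>\<in>weights \<iota> \<inter> F. \<psi> \<omega> \<in> weight_space \<iota> \<omega>}"

text \<open>F_p and F_e; the minimum over an empty set (rho not representable) is +infinity\<close>
definition Fp :: "('v::euclidean_space \<Rightarrow> complex^'n^'n) \<Rightarrow> complex^'n^'n \<Rightarrow> 'v \<Rightarrow> ereal" where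
  "Fp \<iota> W \<rho> = Inf {ereal (Re (trace (G ** W))) | G. pure_state G \<and> iota_star \<iota> G = \<rho>}"

definition Fe :: "('v::euclidean_space \<Rightarrow> complex^'n^'n) \<Rightarrow> complex^'n^'n \<Rightarrow> 'v \<Rightarrow> ereal" where
  "Fe \<iota> W \<rho> = Inf {ereal (Re (trace (G ** W))) | G. density_op G \<and> iota_star \<iota> G = \<rho>}"

end

theory Submission
  imports Defs
begin

definition cinner :: "complex^'n \<Rightarrow> complex^'n \<Rightarrow> complex" where
  "cinner x y = (\<Sum>i\<in>UNIV. cnj (x $ i) * y $ i)"

lemma inner_cinner: "inner x y = Re (cinner x y)" for x y :: "complex^'n"
  by (simp add: inner_vec_def cinner_def inner_complex_def)

lemma cinner_adj: "cinner x (A *v y) = cinner (cadj A *v x) y"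
proof -
  have "cinner x (A *v y) = (\<Sum>i\<in>UNIV. \<Sum>j\<in>UNIV. cnj (x$i) * A$i$j * y$j)"
    by (simp add: cinner_def matrix_vector_mult_def sum_distrib_left mult.assoc)
  also have "\<dots> = (\<Sum>j\<in>UNIV. \<Sum>i\<in>UNIV. cnj (x$i) * A$i$j * y$j)"
    by (rule sum.swap)
  also have "\<dots> = cinner (cadj A *v x) y"
    by (simp add: cinner_def matrix_vector_mult_def cadj_def sum_distrib_right sum_distrib_left mult_ac)
  finally show ?thesis .
qed

lemma cadj_cadj[simp]: "cadj (cadj A) = A"
  by (simp add: cadj_def vec_eq_iff)

lemma cadj_mult: "cadj (A ** B) = cadj B ** cadj A"
  by (simp add: cadj_def matrix_matrix_mult_def vec_eq_iff mult.commute)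

lemma cadj_add: "cadj (A + B) = cadj A + cadj B"
  by (simp add: cadj_def vec_eq_iff)

lemma cadj_diff: "cadj (A - B) = cadj A - cadj B"
  by (simp add: cadj_def vec_eq_iff)

lemma cadj_zero[simp]: "cadj 0 = 0"
  by (simp add: cadj_def vec_eq_iff)

lemma cadj_scaleR: "cadj (r *\<^sub>R A) = r *\<^sub>R cadj A"
  unfolding vec_eq_iff by (simp add: cadj_def)

lemma cadj_mat1[simp]: "cadj (mat 1) = mat 1"
  by (simp add: cadj_def vec_eq_iff mat_def)

lemma cadj_sum: "cadj (sum f S) = (\<Sum>i\<in>S. cadj (f i))"
  by (induct S rule: infinite_finite_induct) (auto simp: cadj_add)

lemma herm_sandwich: "herm G \<Longrightarrow> herm (A ** G ** cadj A)"
  by (simp add: herm_def cadj_mult matrix_mul_assoc)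

lemma herm_sandwich': "herm G \<Longrightarrow> herm (cadj A ** G ** A)"
  using herm_sandwich[of G "cadj A"] by simp

lemma mv_scaleC: "A *v (c *s x) = c *s (A *v x)" for A :: "complex^'n^'m"
  by (simp add: matrix_vector_mult_def vec_eq_iff sum_distrib_left mult_ac)

lemma mv_scaleR: "A *v (r *\<^sub>R x) = r *\<^sub>R (A *v x)" for A :: "complex^'n^'m"
  using linear_iff matrix_vector_mul_linear by blast

lemma scaleR_vec_scaleC: "r *\<^sub>R x = complex_of_real r *s x" for x :: "complex^'n"
  by (simp add: vec_eq_iff) (simp add: scaleR_conv_of_real)

lemma herm_cinner: "herm A \<Longrightarrow> cinner x (A *v y) = cinner (A *v x) y"
  by (metis cinner_adj herm_def)

lemma herm_inner: "herm A \<Longrightarrow> inner x (A *v y) = inner (A *v x) y"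
  by (simp add: inner_cinner herm_cinner)

lemma cinner_cnj: "cnj (cinner x y) = cinner y x"
  by (simp add: cinner_def mult.commute)

lemma cinner_add_right: "cinner x (y + z) = cinner x y + cinner x z"
  by (simp add: cinner_def distrib_left sum.distrib)
lemma cinner_add_left: "cinner (x + y) z = cinner x z + cinner y z"
  by (simp add: cinner_def distrib_right sum.distrib)
lemma cinner_diff_right: "cinner x (y - z) = cinner x y - cinner x z"
  by (simp add: cinner_def right_diff_distrib sum_subtractf)
lemma cinner_diff_left: "cinner (x - y) z = cinner x z - cinner y z"
  by (simp add: cinner_def left_diff_distrib sum_subtractf)
lemma cinner_scaleC_right: "cinner x (c *s y) = c * cinner x y"
  by (simp add: cinner_def sum_distrib_left mult_ac)
lemma cinner_scaleC_left: "cinner (c *s x) y = cnj c * cinner x y"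
  by (simp add: cinner_def sum_distrib_left mult_ac)
lemma cinner_zero_right[simp]: "cinner x 0 = 0"
  by (simp add: cinner_def)
lemma cinner_zero_left[simp]: "cinner 0 x = 0"
  by (simp add: cinner_def)
lemma cinner_sum_right: "cinner x (sum f S) = (\<Sum>i\<in>S. cinner x (f i))"
  by (induct S rule: infinite_finite_induct) (auto simp: cinner_add_right)
lemma cinner_sum_left: "cinner (sum f S) x = (\<Sum>i\<in>S. cinner (f i) x)"
  by (induct S rule: infinite_finite_induct) (auto simp: cinner_add_left)

lemma cinner_self: "cinner x x = complex_of_real (cnorm2 x)"
  unfolding cinner_def cnorm2_def of_real_sum
  by (rule sum.cong) (auto simp: complex_norm_square[symmetric] mult.commute)

lemma cnorm2_eq0: "cnorm2 x = 0 \<longleftrightarrow> x = 0"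
  by (simp add: cnorm2_def sum_nonneg_eq_0_iff vec_eq_iff)

lemma cinner_self_eq0: "cinner x x = 0 \<longleftrightarrow> x = 0"
  by (simp add: cinner_self cnorm2_eq0)

lemma mv_axis: "(A *v axis k 1) $ i = A $ i $ k"
  by (simp add: matrix_vector_mult_def axis_def if_distrib cong: if_cong)

lemma matrix_eq_cinner:
  fixes A B :: "complex^'n^'m"
  assumes "\<And>x y. cinner y (A *v x) = cinner y (B *v x)"
  shows "A = B"
proof -
  have "A *v x = B *v x" for x
  proof -
    have "cinner (A *v x - B *v x) (A *v x - B *v x) = 0"
      by (simp add: cinner_diff_right assms)
    then show ?thesis by (simp add: cinner_self_eq0)
  qed
  then show ?thesis by (simp add: matrix_eq)
qed

lemma qform_cinner: "qform G x = cinner x (G *v x)"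
  by (simp add: qform_def cinner_def matrix_vector_mult_def sum_distrib_left mult_ac)

lemma ketbra_mv: "ketbra x *v y = cinner x y *s x"
  by (simp add: ketbra_def cinner_def matrix_vector_mult_def vec_eq_iff sum_distrib_left mult_ac)

lemma trace_ketbra: "trace (ketbra x ** A) = cinner x (A *v x)"
proof -
  have "trace (ketbra x ** A) = (\<Sum>i\<in>UNIV. \<Sum>j\<in>UNIV. x$i * cnj (x$j) * A$j$i)"
    by (simp add: trace_def ketbra_def matrix_matrix_mult_def)
  also have "\<dots> = (\<Sum>j\<in>UNIV. \<Sum>i\<in>UNIV. x$i * cnj (x$j) * A$j$i)"
    by (rule sum.swap)
  also have "\<dots> = cinner x (A *v x)"
    by (simp add: cinner_def matrix_vector_mult_def sum_distrib_left mult.commute mult.left_commute)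
  finally show ?thesis .
qed

lemma trace_ketbra1: "trace (ketbra x) = complex_of_real (cnorm2 x)"
  using trace_ketbra[of x "mat 1"] by (simp add: cinner_self)

lemma ketbra_sandwich: "A ** ketbra x ** cadj A = ketbra (A *v x)"
proof -
  have "(A ** ketbra x ** cadj A) $ i $ k = (A *v x) $ i * cnj ((A *v x) $ k)" for i k
  proof -
    have "(A ** ketbra x ** cadj A) $ i $ k = (\<Sum>l\<in>UNIV. \<Sum>j\<in>UNIV. A$i$j * x$j * cnj (x$l) * cnj (A$k$l))"
      by (simp add: ketbra_def cadj_def matrix_matrix_mult_def sum_distrib_right mult.assoc)
    also have "\<dots> = (\<Sum>j\<in>UNIV. \<Sum>l\<in>UNIV. A$i$j * x$j * cnj (x$l) * cnj (A$k$l))"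
      by (rule sum.swap)
    also have "\<dots> = (\<Sum>j\<in>UNIV. A$i$j * x$j) * (\<Sum>l\<in>UNIV. cnj (x$l) * cnj (A$k$l))"
      by (simp add: sum_product mult.assoc)
    finally show ?thesis by (simp add: matrix_vector_mult_def mult.commute)
  qed
  then show ?thesis by (simp add: ketbra_def vec_eq_iff)
qed
lemma qform_sandwich: "qform (cadj A ** G ** A) x = qform G (A *v x)"
  by (simp add: qform_cinner cinner_adj matrix_vector_mul_assoc[symmetric])

lemma trace_scaleR: "trace (r *\<^sub>R A) = complex_of_real r * trace A" for A :: "complex^'n^'n"
  by (simp add: trace_def sum_distrib_left) (simp add: scaleR_conv_of_real)

lemma trace_sum: "trace (sum f S) = (\<Sum>i\<in>S. trace (f i))" for f :: "_ \<Rightarrow> complex^'n^'n"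
  by (induct S rule: infinite_finite_induct) (auto simp: trace_add trace_0[simplified])

lemma mult_sum_right: "A ** sum f S = (\<Sum>i\<in>S. A ** f i)" for A :: "complex^'n^'m"
  by (induct S rule: infinite_finite_induct) (auto simp: matrix_add_ldistrib)

lemma matrix_add_rdistrib: "(B + C) ** A = B ** A + C ** A" for A :: "complex^'n^'m"
  by (simp add: matrix_matrix_mult_def vec_eq_iff distrib_right sum.distrib)

lemma mult_sum_left: "sum f S ** A = (\<Sum>i\<in>S. f i ** A)" for A :: "complex^'n^'m"
  by (induct S rule: infinite_finite_induct) (auto simp: matrix_add_rdistrib)

lemma mv_sum_left: "sum f S *v x = (\<Sum>i\<in>S. f i *v x)" for x :: "complex^'n"
  by (induct S rule: infinite_finite_induct) (auto simp: matrix_vector_mult_add_rdistrib)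

lemma mv_sum_right: "A *v sum f S = (\<Sum>i\<in>S. A *v f i)" for A :: "complex^'n^'m"
  by (induct S rule: infinite_finite_induct) (auto simp: matrix_vector_right_distrib)

lemma scaleR_mult_right: "A ** (r *\<^sub>R B) = r *\<^sub>R (A ** B)" for A :: "complex^'n^'m"
  by (simp add: matrix_scalar_ac scalar_matrix_assoc)

lemma scaleR_mv: "(r *\<^sub>R A) *v x = r *\<^sub>R (A *v x)" for A :: "complex^'n^'m"
  by (simp add: matrix_vector_mult_def vec_eq_iff scaleR_sum_right)

lemma trace_sandwich: "trace (cadj A ** G ** A) = (\<Sum>k\<in>UNIV. qform G (A *v axis k 1))"
proof -
  have "trace (cadj A ** G ** A) = (\<Sum>k\<in>UNIV. \<Sum>j\<in>UNIV. \<Sum>i\<in>UNIV. cnj (A$i$k) * G$i$j * A$j$k)"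
    by (simp add: trace_def cadj_def matrix_matrix_mult_def sum_distrib_right)
  also have "\<dots> = (\<Sum>k\<in>UNIV. \<Sum>i\<in>UNIV. \<Sum>j\<in>UNIV. cnj (A$i$k) * G$i$j * A$j$k)"
    by (rule sum.cong[OF refl], rule sum.swap)
  also have "\<dots> = (\<Sum>k\<in>UNIV. qform G (A *v axis k 1))"
    by (simp add: qform_def mv_axis)
  finally show ?thesis .
qed

lemma qform_ketbra: "qform (ketbra x) y = complex_of_real ((cmod (cinner x y))^2)"
proof -
  have "qform (ketbra x) y = cinner x y * cnj (cinner x y)"
    by (simp add: qform_cinner ketbra_mv cinner_scaleC_right cinner_cnj)
  then show ?thesis by (simp only: complex_norm_square)
qed

lemma herm_ketbra: "herm (ketbra x)"
  by (simp add: herm_def ketbra_def cadj_def vec_eq_iff mult.commute)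

lemma pure_density: "pure_state G \<Longrightarrow> density_op G"
  by (auto simp: pure_state_def density_op_def herm_ketbra qform_ketbra trace_ketbra1)

lemma quad_nonneg_zero:
  fixes c d :: real
  assumes "\<And>t. 0 \<le> 2*t*c + t^2*d" "0 \<le> d"
  shows "c = 0"
proof (rule ccontr)
  assume "c \<noteq> 0"
  define t where "t = - c / (d + 1)"
  have "t*(d+1) = -c" unfolding t_def using assms(2) by simp
  then have td: "t*d = -c - t" by (simp add: algebra_simps)
  have "t^2*d = t*(t*d)" by (simp add: power2_eq_square)
  also have "\<dots> = t*(-c-t)" by (simp add: td)
  finally have "2*t*c + t^2*d = t*c - t^2"
    by (simp add: power2_eq_square algebra_simps)
  moreover have "t*c < 0"
  proof -
    have "0 < c*c" using \<open>c \<noteq> 0\<close> by (simp add: zero_less_mult_iff) linarith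
    moreover have "0 < d+1" using assms(2) by simp
    ultimately have "0 < c*c/(d+1)" by simp
    moreover have "t*c = -(c*c/(d+1))" unfolding t_def by simp
    ultimately show ?thesis by simp
  qed
  ultimately show False using assms(1)[of t] by (smt (verit) zero_le_power2)
qed

lemma psd_zero:
  fixes B :: "complex^'n^'n"
  assumes hB: "herm B" and U: "subspace U" and inv: "\<And>z. z \<in> U \<Longrightarrow> B *v z \<in> U"
    and psd: "\<And>z. z \<in> U \<Longrightarrow> 0 \<le> inner z (B *v z)"
    and x: "x \<in> U" and x0: "inner x (B *v x) = 0"
  shows "B *v x = 0"
proof -
  define y where "y = B *v x"
  have yU: "y \<in> U" using inv x y_def by auto
  have sym: "inner x (B *v y) = inner y (B *v x)"
    using herm_inner[OF hB, of x y] by (simp add: inner_commute)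
  have "0 \<le> 2*t*(inner y y) + t^2*(inner y (B *v y))" for t
  proof -
    have "x + t *\<^sub>R y \<in> U" using U x yU by (simp add: subspace_add subspace_scale)
    then have "0 \<le> inner (x + t *\<^sub>R y) (B *v (x + t *\<^sub>R y))" by (rule psd)
    also have "\<dots> = inner x (B *v x) + t * inner x (B *v y) + t * inner y (B *v x) + t^2 * inner y (B *v y)"
      by (simp add: matrix_vector_right_distrib mv_scaleR inner_add_left inner_add_right power2_eq_square algebra_simps)
    also have "\<dots> = 2*t*(inner y y) + t^2*(inner y (B *v y))"
      using x0 sym y_def by simp
    finally show ?thesis .
  qed
  from quad_nonneg_zero[OF this psd[OF yU]] have "inner y y = 0" .
  then show ?thesis by (simp add: y_def)
qed

lemma herm_eigvec:
  fixes A :: "complex^'n^'n"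
  assumes hA: "herm A" and U: "subspace U" and x1: "x1 \<in> U" "x1 \<noteq> 0"
    and inv: "\<And>z. z \<in> U \<Longrightarrow> A *v z \<in> U"
  shows "\<exists>x\<in>U. x \<noteq> 0 \<and> (\<exists>l::real. A *v x = l *\<^sub>R x)"
proof -
  define S where "S = U \<inter> sphere 0 1"
  define f where "f z = inner z (A *v z)" for z
  have "compact (sphere 0 1 \<inter> U)"
    by (rule compact_Int_closed) (auto simp: closed_subspace U)
  then have "compact S" unfolding S_def by (simp add: Int_commute)
  have "(1 / norm x1) *\<^sub>R x1 \<in> S" unfolding S_def using x1 U
    by (simp add: subspace_scale)
  then have "S \<noteq> {}" by auto
  have "continuous_on S f" unfolding f_def
    by (intro continuous_intros linear_continuous_on linear_conv_bounded_linear[THEN iffD1]) auto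
  from continuous_attains_sup[OF \<open>compact S\<close> \<open>S \<noteq> {}\<close> this]
  obtain x0 where x0: "x0 \<in> S" and mx: "\<And>y. y \<in> S \<Longrightarrow> f y \<le> f x0" by blast
  define M where "M = f x0"
  have fscale: "f (c *\<^sub>R z) = c^2 * f z" for c z
    by (simp add: f_def mv_scaleR power2_eq_square)
  have bound: "f z \<le> M * inner z z" if "z \<in> U" for z
  proof (cases "z = 0")
    case True then show ?thesis by (simp add: f_def)
  next
    case False
    have "(1 / norm z) *\<^sub>R z \<in> S" unfolding S_def using that False U
      by (simp add: subspace_scale)
    then have "f ((1 / norm z) *\<^sub>R z) \<le> M" using mx M_def by auto
    then have "f z / (norm z)^2 \<le> M" by (simp add: fscale power_divide)
    then show ?thesis using False by (simp add: divide_le_eq power2_norm_eq_inner[symmetric] mult.commute)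
  qed
  define B where "B = M *\<^sub>R mat 1 - A"
  have Bv: "B *v z = M *\<^sub>R z - A *v z" for z
    by (simp add: B_def matrix_vector_mult_diff_rdistrib scaleR_mv)
  have hB: "herm B" using hA unfolding B_def herm_def by (simp add: cadj_diff cadj_scaleR)
  have x0U: "x0 \<in> U" and nx0: "norm x0 = 1" using x0 S_def by auto
  have "B *v x0 = 0"
  proof (rule psd_zero[OF hB U _ _ x0U])
    show "B *v z \<in> U" if "z \<in> U" for z using that inv U by (simp add: Bv subspace_diff subspace_scale)
    show "0 \<le> inner z (B *v z)" if "z \<in> U" for z using bound[OF that]
      by (simp add: Bv inner_diff_right f_def)
    show "inner x0 (B *v x0) = 0" using nx0
      by (simp add: Bv inner_diff_right f_def M_def power2_norm_eq_inner[symmetric])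
  qed
  then have "A *v x0 = M *\<^sub>R x0" by (simp add: Bv)
  moreover have "x0 \<noteq> 0" using nx0 by auto
  ultimately show ?thesis using x0U by blast
qed

lemma common_eigvec:
  fixes B :: "(complex^'n^'n) set"
  assumes "finite B" "\<forall>A\<in>B. herm A" "\<forall>A\<in>B. \<forall>C\<in>B. A ** C = C ** A"
  shows "subspace U \<Longrightarrow> x1 \<in> U \<Longrightarrow> x1 \<noteq> 0 \<Longrightarrow> \<forall>A\<in>B. \<forall>z\<in>U. A *v z \<in> U
    \<Longrightarrow> \<exists>x\<in>U. x \<noteq> 0 \<and> (\<forall>A\<in>B. \<exists>l::real. A *v x = l *\<^sub>R x)"
  using assms
proof (induction B arbitrary: U x1 rule: finite_induct)
  case empty
  then show ?case by auto
next
  case (insert A B)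
  obtain x0 l where x0: "x0 \<in> U" "x0 \<noteq> 0" and l: "A *v x0 = l *\<^sub>R x0"
    using herm_eigvec[of A U x1] insert.prems by auto
  define U' where "U' = {z \<in> U. A *v z = l *\<^sub>R z}"
  have sU': "subspace U'" using insert.prems(1)
    unfolding U'_def subspace_def
    by (auto simp: matrix_vector_right_distrib mv_scaleR scaleR_add_right)
  have x0U': "x0 \<in> U'" using x0 l U'_def by auto
  have invU': "\<forall>C\<in>B. \<forall>z\<in>U'. C *v z \<in> U'"
  proof (intro ballI)
    fix C z assume C: "C \<in> B" and z: "z \<in> U'"
    have "C *v z \<in> U" using insert.prems(4) C z U'_def by auto
    moreover have "A *v (C *v z) = l *\<^sub>R (C *v z)"
    proof -
      have "A *v (C *v z) = (A ** C) *v z" by (simp add: matrix_vector_mul_assoc)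
      also have "\<dots> = (C ** A) *v z"
      proof -
        have "A ** C = C ** A" using insert.prems(6) C by blast
        then show ?thesis by (rule arg_cong)
      qed
      also have "\<dots> = C *v (l *\<^sub>R z)" using z U'_def by (simp add: matrix_vector_mul_assoc[symmetric])
      finally show ?thesis by (simp add: mv_scaleR)
    qed
    ultimately show "C *v z \<in> U'" using U'_def by auto
  qed
  obtain x where x: "x \<in> U'" "x \<noteq> 0" and ev: "\<forall>C\<in>B. \<exists>l::real. C *v x = l *\<^sub>R x"
    using insert.IH[OF sU' x0U' x0(2) invU'] insert.prems by auto
  then show ?case using U'_def by auto
qed

locale abth =
  fixes \<iota> :: "'v::euclidean_space \<Rightarrow> complex^'n^'n"
  assumes lin: "linear \<iota>" and herm\<iota>: "\<And>v. herm (\<iota> v)"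
    and comm: "\<And>v w. \<iota> v ** \<iota> w = \<iota> w ** \<iota> v"
begin

abbreviation H where "H \<equiv> weight_space \<iota>"
abbreviation \<Omega> where "\<Omega> \<equiv> weights \<iota>"

lemma ws_mem: "x \<in> H a \<longleftrightarrow> (\<forall>v. \<iota> v *v x = complex_of_real (a \<bullet> v) *s x)"
  by (simp add: weight_space_def)

lemma ws_scaleC: "x \<in> H a \<Longrightarrow> c *s x \<in> H a"
  by (simp add: ws_mem mv_scaleC vector_smult_assoc mult.commute)

lemma ws_subspace: "subspace (H a)"
  unfolding subspace_def
  by (auto simp: ws_mem matrix_vector_right_distrib vector_add_ldistrib mv_scaleC
      scaleR_vec_scaleC vector_smult_assoc mult.commute)

lemma ws_zero: "0 \<in> H a"
  using ws_subspace subspace_0 by blast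

lemma ws_orth:
  assumes x: "x \<in> H a" and y: "y \<in> H b" and ab: "a \<noteq> b"
  shows "cinner x y = 0"
proof -
  define v where "v = a - b"
  have "cinner x (\<iota> v *v y) = cinner (\<iota> v *v x) y" by (rule herm_cinner[OF herm\<iota>])
  then have "complex_of_real (b \<bullet> v) * cinner x y = complex_of_real (a \<bullet> v) * cinner x y"
    using x y by (simp add: ws_mem cinner_scaleC_right cinner_scaleC_left)
  then have "cinner x y = 0 \<or> b \<bullet> v = a \<bullet> v" by simp
  moreover have "a \<bullet> v - b \<bullet> v \<noteq> 0"
    using ab by (simp add: v_def inner_diff_left[symmetric])
  ultimately show ?thesis by auto
qed

lemma weights_iff: "a \<in> \<Omega> \<longleftrightarrow> (\<exists>x\<in>H a. x \<noteq> 0)"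
  using ws_zero by (auto simp: weights_def)

lemma finite_weights: "finite \<Omega>"
proof -
  obtain f where f: "\<And>a. a \<in> \<Omega> \<Longrightarrow> f a \<in> H a \<and> f a \<noteq> 0"
    using weights_iff by metis
  have inj: "inj_on f \<Omega>"
  proof (rule inj_onI)
    fix a b assume a: "a \<in> \<Omega>" and b: "b \<in> \<Omega>" and e: "f a = f b"
    show "a = b"
    proof (rule ccontr)
      assume "a \<noteq> b"
      then have "cinner (f a) (f b) = 0" using ws_orth f a b by blast
      then show False using e f[OF a] by (simp add: cinner_self_eq0)
    qed
  qed
  have "pairwise orthogonal (f ` \<Omega>)"
  proof (clarsimp simp: pairwise_def)
    fix a b assume a: "a \<in> \<Omega>" and b: "b \<in> \<Omega>" and ne: "f a \<noteq> f b"
    then have "a \<noteq> b" by auto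
    then have "cinner (f a) (f b) = 0" using ws_orth[of "f a" a "f b" b] f a b by blast
    then show "orthogonal (f a) (f b)" by (simp add: orthogonal_def inner_cinner)
  qed
  moreover have "0 \<notin> f ` \<Omega>" using f by auto
  ultimately have "independent (f ` \<Omega>)" by (rule pairwise_orthogonal_independent)
  then have "finite (f ` \<Omega>)" by (rule independent_imp_finite)
  then show ?thesis using inj finite_imageD by blast
qed

lemma iota_sum: "\<iota> v = (\<Sum>b\<in>Basis. (v \<bullet> b) *\<^sub>R \<iota> b)"
proof -
  have "\<iota> v = \<iota> (\<Sum>b\<in>Basis. (v \<bullet> b) *\<^sub>R b)" by (simp add: euclidean_representation)
  also have "\<dots> = (\<Sum>b\<in>Basis. (v \<bullet> b) *\<^sub>R \<iota> b)"
    by (simp add: linear_sum[OF lin] linear_cmul[OF lin])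
  finally show ?thesis .
qed

lemma common_weight_vector:
  assumes U: "subspace U" and x1: "x1 \<in> U" "x1 \<noteq> 0"
    and inv: "\<And>v z. z \<in> U \<Longrightarrow> \<iota> v *v z \<in> U"
  shows "\<exists>x\<in>U. x \<noteq> 0 \<and> (\<exists>a. x \<in> H a)"
proof -
  have "\<exists>x\<in>U. x \<noteq> 0 \<and> (\<forall>A\<in>\<iota> ` Basis. \<exists>l::real. A *v x = l *\<^sub>R x)"
    by (rule common_eigvec) (use U x1 inv herm\<iota> comm in auto)
  then obtain x where xU: "x \<in> U" and x0: "x \<noteq> 0"
    and ev: "\<forall>b\<in>Basis. \<exists>l::real. \<iota> b *v x = l *\<^sub>R x" by auto
  then obtain lf where lf: "\<And>b. b \<in> Basis \<Longrightarrow> \<iota> b *v x = lf b *\<^sub>R x" by metis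
  define a where "a = (\<Sum>b\<in>Basis. lf b *\<^sub>R b)"
  have "\<iota> v *v x = complex_of_real (a \<bullet> v) *s x" for v
  proof -
    have "\<iota> v *v x = (\<Sum>b\<in>Basis. (v \<bullet> b) *\<^sub>R (\<iota> b *v x))"
      by (subst iota_sum) (simp add: mv_sum_left scaleR_mv)
    also have "\<dots> = (\<Sum>b\<in>Basis. ((v \<bullet> b) * lf b) *\<^sub>R x)"
      by (rule sum.cong) (auto simp: lf)
    also have "\<dots> = (\<Sum>b\<in>Basis. (v \<bullet> b) * lf b) *\<^sub>R x"
      by (simp add: scaleR_sum_left)
    also have "(\<Sum>b\<in>Basis. (v \<bullet> b) * lf b) = a \<bullet> v"
      by (simp add: a_def inner_sum_right mult.commute inner_commute)
    finally show ?thesis by (simp add: scaleR_vec_scaleC)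
  qed
  then have "x \<in> H a" by (simp add: ws_mem)
  then show ?thesis using xU x0 by blast
qed

lemma decomp_span: "x \<in> span (\<Union>a. H a)"
proof -
  define S0 where "S0 = (\<Union>a. H a)"
  obtain y z where y: "y \<in> span S0" and z: "\<And>w. w \<in> span S0 \<Longrightarrow> orthogonal z w"
    and xyz: "x = y + z"
    using orthogonal_subspace_decomp_exists[of S0 x] by blast
  define U where "U = {z. \<forall>w\<in>span S0. orthogonal w z}"
  have sU: "subspace U" unfolding U_def by (rule subspace_orthogonal_to_vectors)
  have spinv: "\<iota> v *v w \<in> span S0" if "w \<in> span S0" for v w
  proof -
    have lf: "linear (\<lambda>x. \<iota> v *v x)" by simp
    have "(\<lambda>x. \<iota> v *v x) ` S0 \<subseteq> S0"
    proof
      fix y assume "y \<in> (\<lambda>x. \<iota> v *v x) ` S0"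
      then obtain x a where x: "x \<in> H a" and y: "y = \<iota> v *v x" unfolding S0_def by blast
      then have "y = complex_of_real (a \<bullet> v) *s x" by (simp add: ws_mem)
      then have "y \<in> H a" using x ws_scaleC by simp
      then show "y \<in> S0" unfolding S0_def by blast
    qed
    then have "span ((\<lambda>x. \<iota> v *v x) ` S0) \<subseteq> span S0" by (rule span_mono)
    then show ?thesis using span_linear_image[OF lf, of S0] that by blast
  qed
  have inv: "\<iota> v *v u \<in> U" if "u \<in> U" for v u
    unfolding U_def
  proof (intro CollectI ballI)
    fix w assume w: "w \<in> span S0"
    have "inner w (\<iota> v *v u) = inner (\<iota> v *v w) u" by (rule herm_inner[OF herm\<iota>])
    also have "\<dots> = 0" using that spinv[OF w] unfolding U_def orthogonal_def by blast
    finally show "orthogonal w (\<iota> v *v u)" by (simp add: orthogonal_def)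
  qed
  have zU: "z \<in> U" using z unfolding U_def by (simp add: orthogonal_commute)
  have "z = 0"
  proof (rule ccontr)
    assume "z \<noteq> 0"
    then obtain u a where u: "u \<in> U" "u \<noteq> 0" "u \<in> H a"
      using common_weight_vector[OF sU zU _ inv] by blast
    then have "u \<in> span S0" unfolding S0_def by (auto intro: span_base)
    then have "orthogonal u u" using u unfolding U_def by blast
    then show False using u by (simp add: orthogonal_def)
  qed
  then show ?thesis using y xyz S0_def by simp
qed

lemma decomp: "\<exists>\<psi>. (\<forall>a\<in>\<Omega>. \<psi> a \<in> H a) \<and> x = (\<Sum>a\<in>\<Omega>. \<psi> a)"
proof -
  define D where "D = {(\<Sum>a\<in>\<Omega>. \<psi> a) | \<psi>. \<forall>a\<in>\<Omega>. \<psi> a \<in> H a}"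
  have sD: "subspace D" unfolding subspace_def D_def
  proof (intro conjI allI impI ballI)
    show "0 \<in> {(\<Sum>a\<in>\<Omega>. \<psi> a) | \<psi>. \<forall>a\<in>\<Omega>. \<psi> a \<in> H a}"
      using ws_zero by (intro CollectI exI[of _ "\<lambda>_. 0"]) auto
  next
    fix x y assume x: "x \<in> {(\<Sum>a\<in>\<Omega>. \<psi> a) | \<psi>. \<forall>a\<in>\<Omega>. \<psi> a \<in> H a}"
      and y: "y \<in> {(\<Sum>a\<in>\<Omega>. \<psi> a) | \<psi>. \<forall>a\<in>\<Omega>. \<psi> a \<in> H a}"
    then obtain \<psi> \<phi> where p: "\<forall>a\<in>\<Omega>. \<psi> a \<in> H a" "x = (\<Sum>a\<in>\<Omega>. \<psi> a)"
      and q: "\<forall>a\<in>\<Omega>. \<phi> a \<in> H a" "y = (\<Sum>a\<in>\<Omega>. \<phi> a)" by blast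
    show "x + y \<in> {(\<Sum>a\<in>\<Omega>. \<psi> a) | \<psi>. \<forall>a\<in>\<Omega>. \<psi> a \<in> H a}"
      using p q ws_subspace
      by (intro CollectI exI[of _ "\<lambda>a. \<psi> a + \<phi> a"]) (auto simp: sum.distrib subspace_add)
  next
    fix c x assume x: "x \<in> {(\<Sum>a\<in>\<Omega>. \<psi> a) | \<psi>. \<forall>a\<in>\<Omega>. \<psi> a \<in> H a}"
    then obtain \<psi> where p: "\<forall>a\<in>\<Omega>. \<psi> a \<in> H a" "x = (\<Sum>a\<in>\<Omega>. \<psi> a)" by blast
    show "c *\<^sub>R x \<in> {(\<Sum>a\<in>\<Omega>. \<psi> a) | \<psi>. \<forall>a\<in>\<Omega>. \<psi> a \<in> H a}"
      using p ws_subspace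
      by (intro CollectI exI[of _ "\<lambda>a. c *\<^sub>R \<psi> a"]) (auto simp: scaleR_sum_right subspace_scale)
  qed
  have "(\<Union>a. H a) \<subseteq> D"
  proof
    fix x assume "x \<in> (\<Union>a. H a)"
    then obtain b where xb: "x \<in> H b" by blast
    show "x \<in> D"
    proof (cases "b \<in> \<Omega>")
      case True
      then show ?thesis unfolding D_def using xb ws_zero finite_weights
        by (intro CollectI exI[of _ "\<lambda>a. if a = b then x else 0"]) (auto simp: sum.delta)
    next
      case False
      then have "x = 0" using xb weights_iff by blast
      then show ?thesis using sD subspace_0 by blast
    qed
  qed
  then have "span (\<Union>a. H a) \<subseteq> D" using sD by (rule span_minimal)
  then show ?thesis using decomp_span[of x] unfolding D_def by blast
qed

lemma decomp_unique:
  assumes p: "\<forall>a\<in>\<Omega>. \<psi> a \<in> H a" and q: "\<forall>a\<in>\<Omega>. \<phi> a \<in> H a"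
    and e: "(\<Sum>a\<in>\<Omega>. \<psi> a) = (\<Sum>a\<in>\<Omega>. \<phi> a)" and b: "b \<in> \<Omega>"
  shows "\<psi> b = \<phi> b"
proof -
  define d where "d a = \<psi> a - \<phi> a" for a
  have dH: "d a \<in> H a" if "a \<in> \<Omega>" for a
    using p q that ws_subspace by (simp add: d_def subspace_diff)
  have "(\<Sum>a\<in>\<Omega>. d a) = 0" using e by (simp add: d_def sum_subtractf)
  then have "0 = cinner (d b) (\<Sum>a\<in>\<Omega>. d a)" by simp
  also have "\<dots> = (\<Sum>a\<in>\<Omega>. if a = b then cinner (d b) (d b) else 0)"
    unfolding cinner_sum_right
  proof (intro sum.cong refl)
    fix a assume a: "a \<in> \<Omega>"
    show "cinner (d b) (d a) = (if a = b then cinner (d b) (d b) else 0)"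
      using ws_orth[OF dH[OF b] dH[OF a]] by auto
  qed
  also have "\<dots> = cinner (d b) (d b)" using b finite_weights by (simp add: sum.delta)
  finally show ?thesis by (simp add: cinner_self_eq0 d_def)
qed

definition dec where "dec x = (SOME \<psi>. (\<forall>a\<in>\<Omega>. \<psi> a \<in> H a) \<and> x = (\<Sum>a\<in>\<Omega>. \<psi> a))"

lemma dec: "(\<forall>a\<in>\<Omega>. dec x a \<in> H a) \<and> x = (\<Sum>a\<in>\<Omega>. dec x a)"
  unfolding dec_def by (fact someI_ex[OF decomp[of x]])

definition P where "P a = (\<chi> i k. dec (axis k 1) a $ i)"

lemma P_col: "P a *v axis k 1 = dec (axis k 1) a"
  by (simp add: vec_eq_iff mv_axis P_def)

lemma P_in: "a \<in> \<Omega> \<Longrightarrow> P a *v x \<in> H a"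
proof -
  assume a: "a \<in> \<Omega>"
  have "P a *v x = P a *v (\<Sum>k\<in>UNIV. x$k *s axis k 1)" by (simp add: basis_expansion)
  also have "\<dots> = (\<Sum>k\<in>UNIV. x$k *s dec (axis k 1) a)" by (simp add: mv_sum_right mv_scaleC P_col)
  finally show ?thesis using dec a ws_subspace
    by (auto intro!: subspace_sum ws_scaleC)
qed

lemma P_sum: "(\<Sum>a\<in>\<Omega>. P a) = mat 1"
proof -
  have "(\<Sum>a\<in>\<Omega>. P a) $ i $ k = mat 1 $ i $ k" for i k
  proof -
    have "(\<Sum>a\<in>\<Omega>. P a) $ i $ k = ((\<Sum>a\<in>\<Omega>. P a) *v axis k 1) $ i" by (simp add: mv_axis)
    also have "\<dots> = axis k 1 $ i" using dec[of "axis k 1"] by (simp add: mv_sum_left P_col)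
    finally show ?thesis by (simp add: mat_def axis_def)
  qed
  then show ?thesis by (simp add: vec_eq_iff)
qed

lemma P_decomp: "x = (\<Sum>a\<in>\<Omega>. P a *v x)"
  using P_sum by (metis matrix_vector_mul_lid mv_sum_left)

lemma P_on: assumes a: "a \<in> \<Omega>" and b: "b \<in> \<Omega>" and x: "x \<in> H b"
  shows "P a *v x = (if a = b then x else 0)"
proof (rule decomp_unique[where \<psi>="\<lambda>a. P a *v x" and \<phi>="\<lambda>a. if a = b then x else 0", OF _ _ _ a])
  show "\<forall>a\<in>\<Omega>. P a *v x \<in> H a" using P_in by blast
  show "\<forall>a\<in>\<Omega>. (if a = b then x else 0) \<in> H a" using x ws_zero by auto
  show "(\<Sum>a\<in>\<Omega>. P a *v x) = (\<Sum>a\<in>\<Omega>. if a = b then x else 0)"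
    using b finite_weights P_decomp[of x] by (simp add: sum.delta)
qed

lemma P_idem: "a \<in> \<Omega> \<Longrightarrow> P a ** P a = P a"
  by (simp add: matrix_eq matrix_vector_mul_assoc[symmetric] P_on P_in)

lemma P_orth: "a \<in> \<Omega> \<Longrightarrow> b \<in> \<Omega> \<Longrightarrow> a \<noteq> b \<Longrightarrow> P a ** P b = 0"
  by (simp add: matrix_eq matrix_vector_mul_assoc[symmetric] P_on P_in)

lemma P_cinner: assumes a: "a \<in> \<Omega>"
  shows "cinner y (P a *v x) = cinner (P a *v y) (P a *v x)"
proof -
  have "cinner y (P a *v x) = (\<Sum>b\<in>\<Omega>. cinner (P b *v y) (P a *v x))"
    by (subst P_decomp[of y]) (simp add: cinner_sum_left)
  also have "\<dots> = (\<Sum>b\<in>\<Omega>. if b = a then cinner (P a *v y) (P a *v x) else 0)"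
    using a by (intro sum.cong) (auto intro: ws_orth P_in)
  finally show ?thesis using a finite_weights by (simp add: sum.delta)
qed

lemma P_herm: assumes a: "a \<in> \<Omega>" shows "herm (P a)"
proof -
  have "cadj (P a) = P a"
  proof (rule matrix_eq_cinner)
    fix x y
    have "cinner y (cadj (P a) *v x) = cinner (P a *v y) x"
      by (simp add: cinner_adj)
    also have "\<dots> = cnj (cinner x (P a *v y))" by (simp add: cinner_cnj)
    also have "\<dots> = cnj (cinner (P a *v x) (P a *v y))" using P_cinner[OF a] by simp
    also have "\<dots> = cinner (P a *v y) (P a *v x)" by (simp add: cinner_cnj)
    also have "\<dots> = cinner y (P a *v x)" using P_cinner[OF a] by simp
    finally show "cinner y (cadj (P a) *v x) = cinner y (P a *v x)" .
  qed
  then show ?thesis by (simp add: herm_def)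
qed

lemma iota_P: "\<iota> v = (\<Sum>a\<in>\<Omega>. (a \<bullet> v) *\<^sub>R P a)"
proof -
  have "\<iota> v *v x = (\<Sum>a\<in>\<Omega>. (a \<bullet> v) *\<^sub>R P a) *v x" for x
  proof -
    have "\<iota> v *v x = (\<Sum>a\<in>\<Omega>. \<iota> v *v (P a *v x))"
      by (subst P_decomp[of x]) (simp add: mv_sum_right)
    also have "\<dots> = (\<Sum>a\<in>\<Omega>. (a \<bullet> v) *\<^sub>R (P a *v x))"
      by (intro sum.cong refl) (use P_in in \<open>auto simp: ws_mem scaleR_vec_scaleC\<close>)
    finally show ?thesis by (simp add: mv_sum_left scaleR_mv)
  qed
  then show ?thesis by (simp add: matrix_eq)
qed

lemma mat1_nonzero: "mat 1 \<noteq> (0::complex^'n^'n)"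
proof
  assume "mat 1 = (0::complex^'n^'n)"
  then have "(mat 1 :: complex^'n^'n) $ undefined $ undefined = 0" by simp
  then show False by (simp add: mat_def)
qed

lemma weights_nonempty: "\<Omega> \<noteq> {}"
  using P_sum mat1_nonzero by auto

lemma iota_scalar: "\<iota> -` span {mat 1} = {v. \<exists>c. \<forall>a\<in>\<Omega>. a \<bullet> v = c}"
proof (intro set_eqI iffI)
  fix v assume "v \<in> \<iota> -` span {mat 1}"
  then obtain c where c: "\<iota> v = c *\<^sub>R mat 1" by (auto simp: span_singleton)
  have "a \<bullet> v = c" if a: "a \<in> \<Omega>" for a
  proof -
    obtain x where x: "x \<in> H a" "x \<noteq> 0" using a weights_iff by blast
    have "\<iota> v *v x = complex_of_real (a \<bullet> v) *s x" using x by (simp add: ws_mem)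
    moreover have "\<iota> v *v x = complex_of_real c *s x" using c by (simp add: scaleR_mv scaleR_vec_scaleC)
    ultimately show ?thesis using x(2) by simp
  qed
  then show "v \<in> {v. \<exists>c. \<forall>a\<in>\<Omega>. a \<bullet> v = c}" by blast
next
  fix v assume "v \<in> {v. \<exists>c. \<forall>a\<in>\<Omega>. a \<bullet> v = c}"
  then obtain c where c: "\<And>a. a \<in> \<Omega> \<Longrightarrow> a \<bullet> v = c" by blast
  have "\<iota> v = (\<Sum>a\<in>\<Omega>. c *\<^sub>R P a)" using c by (simp add: iota_P)
  also have "\<dots> = c *\<^sub>R mat 1" by (simp add: scaleR_sum_right[symmetric] P_sum)
  finally show "v \<in> \<iota> -` span {mat 1}" by (simp add: span_singleton) blast
qed

end

lemma trace_conj: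
  fixes Pj :: "complex^'n^'m" and G :: "complex^'m^'m" and X :: "complex^'n^'n"
  shows "trace (cadj Pj ** G ** Pj ** X) = trace (G ** (Pj ** X ** cadj Pj))"
proof -
  have "trace (cadj Pj ** G ** Pj ** X) = trace (cadj Pj ** (G ** Pj ** X))"
    by (simp add: matrix_mul_assoc)
  also have "\<dots> = trace ((G ** Pj ** X) ** cadj Pj)" by (rule trace_mul_sym)
  finally show ?thesis by (simp add: matrix_mul_assoc)
qed

lemma psd_re_qform: "density_op G \<Longrightarrow> 0 \<le> inner z (G *v z)"
  by (simp add: density_op_def inner_cinner qform_cinner[symmetric])

context abth
begin

definition pw where "pw G a = Re (trace (G ** P a))"

lemma trace_iota: "trace (G ** \<iota> b) = (\<Sum>a\<in>\<Omega>. complex_of_real (a \<bullet> b) * trace (G ** P a))"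
  by (simp add: iota_P mult_sum_right scaleR_mult_right trace_sum trace_scaleR)

lemma iota_star_P: "iota_star \<iota> G = (\<Sum>a\<in>\<Omega>. pw G a *\<^sub>R a)"
proof -
  have "iota_star \<iota> G = (\<Sum>b\<in>Basis. (\<Sum>a\<in>\<Omega>. (a \<bullet> b) * pw G a) *\<^sub>R b)"
    unfolding iota_star_def trace_iota pw_def by (simp add: Re_sum)
  also have "\<dots> = (\<Sum>a\<in>\<Omega>. pw G a *\<^sub>R (\<Sum>b\<in>Basis. (a \<bullet> b) *\<^sub>R b))"
    by (simp add: scaleR_sum_left scaleR_sum_right sum.swap[of _ Basis] mult.commute)
  also have "\<dots> = (\<Sum>a\<in>\<Omega>. pw G a *\<^sub>R a)" by (simp add: euclidean_representation)
  finally show ?thesis .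
qed

lemma trace_P: assumes a: "a \<in> \<Omega>"
  shows "trace (G ** P a) = (\<Sum>k\<in>UNIV. qform G (P a *v axis k 1))"
proof -
  have "trace (G ** P a) = trace ((G ** P a) ** P a)"
    using P_idem[OF a] by (simp add: matrix_mul_assoc[symmetric])
  also have "\<dots> = trace (P a ** (G ** P a))" by (rule trace_mul_sym)
  also have "\<dots> = trace (cadj (P a) ** G ** P a)"
    using P_herm[OF a] by (simp add: herm_def matrix_mul_assoc)
  finally show ?thesis by (simp add: trace_sandwich)
qed

lemma pw_nonneg: assumes G: "density_op G" and a: "a \<in> \<Omega>" shows "0 \<le> pw G a"
  using G unfolding pw_def trace_P[OF a] Re_sum density_op_def
  by (auto intro: sum_nonneg)

lemma pw_sum: assumes G: "density_op G" shows "(\<Sum>a\<in>\<Omega>. pw G a) = 1"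
proof -
  have "(\<Sum>a\<in>\<Omega>. pw G a) = Re (trace (G ** (\<Sum>a\<in>\<Omega>. P a)))"
    by (simp add: pw_def mult_sum_right trace_sum Re_sum)
  also have "\<dots> = 1" using G by (simp add: P_sum density_op_def)
  finally show ?thesis .
qed

lemma pw_zero: assumes G: "density_op G" and a: "a \<in> \<Omega>" and z: "pw G a = 0"
  shows "G ** P a = 0"
proof -
  have hG: "herm G" using G by (simp add: density_op_def)
  have "\<forall>k\<in>UNIV. Re (qform G (P a *v axis k 1)) = 0"
    using z G unfolding pw_def trace_P[OF a] Re_sum density_op_def
    by (subst sum_nonneg_eq_0_iff[symmetric]) auto
  have "G *v (P a *v axis k 1) = 0" for k
  proof (rule psd_zero[OF hG subspace_UNIV _ _ UNIV_I])
    show "0 \<le> inner z (G *v z)" for z by (rule psd_re_qform[OF G])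
    show "inner (P a *v axis k 1) (G *v (P a *v axis k 1)) = 0"
      using \<open>\<forall>k\<in>UNIV. Re (qform G (P a *v axis k 1)) = 0\<close> by (simp add: inner_cinner qform_cinner)
  qed auto
  then have "(G ** P a) $ i $ k = 0" for i k
    by (metis matrix_vector_mul_assoc mv_axis zero_index)
  then show ?thesis by (simp add: vec_eq_iff)
qed

end

locale abfacet = abth \<iota> for \<iota> :: "'v::euclidean_space \<Rightarrow> complex^'n^'n" +
  fixes F :: "'v set" and Pj :: "complex^'n^'m"
  assumes facet: "F facet_of convex hull (weights \<iota>)"
    and coiso: "Pj ** cadj Pj = mat 1"
    and prange: "range (\<lambda>x. cadj Pj *v x) = facet_space \<iota> F"
begin

definition Qm where "Qm = cadj Pj ** Pj"
definition Rm where "Rm = (\<Sum>a\<in>\<Omega> \<inter> F. P a)"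

lemma finite_OF: "finite (\<Omega> \<inter> F)"
  using finite_weights by simp

lemma exposed: "\<exists>h \<beta>. convex hull \<Omega> \<subseteq> {x. h \<bullet> x \<le> \<beta>} \<and> F = convex hull \<Omega> \<inter> {x. h \<bullet> x = \<beta>}"
proof -
  have "polytope (convex hull \<Omega>)" using finite_weights by (auto simp: polytope_def)
  then have "polyhedron (convex hull \<Omega>)" by (rule polytope_imp_polyhedron)
  moreover have "F face_of convex hull \<Omega>" using facet by (rule facet_of_imp_face_of)
  ultimately have "F exposed_face_of convex hull \<Omega>" by (simp add: exposed_face_of_polyhedron)
  then show ?thesis by (auto simp: exposed_face_of_def)
qed

lemma F_hull: "F = convex hull (\<Omega> \<inter> F)"
proof -
  have face: "F face_of convex hull \<Omega>" using facet by (rule facet_of_imp_face_of)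
  obtain S' where S': "S' \<subseteq> \<Omega>" "F = convex hull S'"
    by (rule face_of_convex_hull_subset[OF finite_imp_compact[OF finite_weights] face])
  have "S' \<subseteq> F" using S'(2) by (simp add: hull_subset)
  then have "S' \<subseteq> \<Omega> \<inter> F" using S'(1) by blast
  then have "convex hull S' \<subseteq> convex hull (\<Omega> \<inter> F)" by (rule hull_mono)
  then have "F \<subseteq> convex hull (\<Omega> \<inter> F)" using S'(2) by simp
  moreover have "convex hull (\<Omega> \<inter> F) \<subseteq> F"
    using face_of_imp_convex[OF face] by (intro hull_minimal) auto
  ultimately show ?thesis by blast
qed

lemma F_nonempty: "F \<noteq> {}"
  using facet by (simp add: facet_of_def)

lemma OF_nonempty: "\<Omega> \<inter> F \<noteq> {}"
  using F_hull F_nonempty by auto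

lemma aff_dim_OF: "aff_dim (\<Omega> \<inter> F) = aff_dim \<Omega> - 1"
proof -
  have "aff_dim (\<Omega> \<inter> F) = aff_dim F" using F_hull by (metis aff_dim_convex_hull)
  also have "\<dots> = aff_dim (convex hull \<Omega>) - 1" using facet by (simp add: facet_of_def)
  finally show ?thesis by (simp add: aff_dim_convex_hull)
qed

lemma R_herm: "herm Rm"
  unfolding herm_def Rm_def cadj_sum using P_herm by (auto simp: herm_def intro: sum.cong)

lemma R_P: assumes a: "a \<in> \<Omega>" and x: "x \<in> H a"
  shows "Rm *v x = (if a \<in> F then x else 0)"
proof -
  have "Rm *v x = (\<Sum>c\<in>\<Omega> \<inter> F. if c = a then x else 0)"
    unfolding Rm_def mv_sum_left using P_on[OF _ a x] by (intro sum.cong) auto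
  also have "\<dots> = (if a \<in> F then x else 0)" using finite_OF a by (simp add: sum.delta)
  finally show ?thesis .
qed

lemma fs_eq: "facet_space \<iota> F = {x. Rm *v x = x}"
proof (intro set_eqI iffI)
  fix x assume "x \<in> facet_space \<iota> F"
  then obtain \<psi> where p: "\<forall>a\<in>\<Omega> \<inter> F. \<psi> a \<in> H a" and x: "x = (\<Sum>a\<in>\<Omega> \<inter> F. \<psi> a)"
    by (auto simp: facet_space_def)
  have "Rm *v x = (\<Sum>a\<in>\<Omega> \<inter> F. Rm *v \<psi> a)" by (simp add: x mv_sum_right)
  also have "\<dots> = x" unfolding x using p R_P by (intro sum.cong) auto
  finally show "x \<in> {x. Rm *v x = x}" by simp
next
  fix x assume "x \<in> {x. Rm *v x = x}"
  then have "x = (\<Sum>a\<in>\<Omega> \<inter> F. P a *v x)" by (simp add: Rm_def mv_sum_left)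
  then show "x \<in> facet_space \<iota> F" unfolding facet_space_def using P_in by blast
qed

lemma R_in: "Rm *v y \<in> facet_space \<iota> F"
proof -
  have e: "Rm *v y = (\<Sum>a\<in>\<Omega> \<inter> F. P a *v y)" by (simp add: Rm_def mv_sum_left)
  have "Rm *v (Rm *v y) = (\<Sum>a\<in>\<Omega> \<inter> F. Rm *v (P a *v y))" by (simp only: e mv_sum_right)
  also have "\<dots> = (\<Sum>a\<in>\<Omega> \<inter> F. P a *v y)"
  proof (intro sum.cong refl)
    fix a assume a: "a \<in> \<Omega> \<inter> F"
    then show "Rm *v (P a *v y) = P a *v y" using R_P[of a "P a *v y"] P_in[of a y] by simp
  qed
  also have "\<dots> = Rm *v y" by (simp add: e)
  finally show ?thesis by (simp add: fs_eq)
qed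

lemma Q_in: "Qm *v x \<in> facet_space \<iota> F"
  using prange by (auto simp: Qm_def matrix_vector_mul_assoc[symmetric])

lemma Q_fix: assumes "x \<in> facet_space \<iota> F" shows "Qm *v x = x"
proof -
  obtain y where "x = cadj Pj *v y" using assms prange by (metis rangeE)
  then show ?thesis
    by (simp add: Qm_def matrix_vector_mul_assoc matrix_mul_assoc[symmetric] coiso)
qed

lemma Q_herm: "herm Qm"
  by (simp add: Qm_def herm_def cadj_mult)

lemma Q_eq_R: "Qm = Rm"
proof -
  have RQ: "Rm ** Qm = Qm"
    using Q_in by (simp add: matrix_eq matrix_vector_mul_assoc[symmetric] fs_eq)
  have QR: "Qm ** Rm = Rm"
    by (simp add: matrix_eq matrix_vector_mul_assoc[symmetric] Q_fix R_in)
  have "Rm ** Qm = cadj (Qm ** Rm)"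
    using Q_herm R_herm by (simp add: cadj_mult herm_def)
  then show ?thesis using RQ QR R_herm by (simp add: herm_def)
qed

lemma Q_P: assumes a: "a \<in> \<Omega>" shows "Qm ** P a = (if a \<in> F then P a else 0)"
  by (simp add: matrix_eq matrix_vector_mul_assoc[symmetric] Q_eq_R R_P[OF a P_in[OF a]])

lemma P_Q: assumes a: "a \<in> \<Omega>" shows "P a ** Qm = (if a \<in> F then P a else 0)"
proof -
  have "P a ** Qm = cadj (Qm ** P a)"
    using Q_herm P_herm[OF a] by (simp add: cadj_mult herm_def)
  then show ?thesis using Q_P[OF a] P_herm[OF a] by (simp add: herm_def)
qed

lemma Q_iota: "Qm ** \<iota> v = \<iota> v ** Qm"
  by (simp add: iota_P mult_sum_right mult_sum_left scaleR_mult_right scalar_matrix_assoc[symmetric]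
      Q_P P_Q cong: sum.cong)

lemma Q_idem: "Qm ** Qm = Qm"
  by (simp add: Qm_def matrix_mul_assoc) (simp add: matrix_mul_assoc[symmetric] coiso)

lemma Pj_Q: "Pj ** Qm = Pj"
  by (simp add: Qm_def matrix_mul_assoc coiso)

lemma Q_Pjadj: "Qm ** cadj Pj = cadj Pj"
  by (simp add: Qm_def matrix_mul_assoc[symmetric] coiso)

end

lemma mat_mul_rzero[simp]: "(A::complex^'n^'m) ** (0::complex^'k^'n) = 0"
  by (simp add: matrix_matrix_mult_def vec_eq_iff)

context abfacet
begin

lemma pw_QGQ: assumes G: "density_op G"
  shows "(\<forall>a\<in>\<Omega> - F. pw G a = 0) \<longleftrightarrow> G = Qm ** G ** Qm"
proof
  assume z: "\<forall>a\<in>\<Omega> - F. pw G a = 0"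
  have GP: "G ** P a = 0" if "a \<in> \<Omega> - F" for a using pw_zero[OF G] z that by blast
  have "G ** Qm = (\<Sum>a\<in>\<Omega> \<inter> F. G ** P a)" by (simp add: Q_eq_R Rm_def mult_sum_right)
  also have "\<dots> = (\<Sum>a\<in>\<Omega>. G ** P a)"
    by (rule sum.mono_neutral_left) (auto simp: finite_weights GP)
  also have "\<dots> = G" by (simp add: mult_sum_right[symmetric] P_sum)
  finally have GQ: "G ** Qm = G" .
  have hG: "herm G" using G by (simp add: density_op_def)
  have "Qm ** G = cadj (G ** Qm)" using hG Q_herm by (simp add: cadj_mult herm_def)
  then have QG: "Qm ** G = G" using GQ hG by (simp add: herm_def)
  show "G = Qm ** G ** Qm" using GQ QG by (simp add: matrix_mul_assoc[symmetric])
next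
  assume e: "G = Qm ** G ** Qm"
  show "\<forall>a\<in>\<Omega> - F. pw G a = 0"
  proof
    fix a assume a: "a \<in> \<Omega> - F"
    have "G ** P a = (Qm ** G ** Qm) ** P a" using e by (rule arg_cong)
    also have "\<dots> = Qm ** G ** (Qm ** P a)" by (simp add: matrix_mul_assoc)
    also have "\<dots> = 0" using Q_P[of a] a by simp
    finally show "pw G a = 0" by (simp add: pw_def trace_def)
  qed
qed

lemma star_in_F: assumes G: "density_op G"
  shows "iota_star \<iota> G \<in> F \<longleftrightarrow> (\<forall>a\<in>\<Omega> - F. pw G a = 0)"
proof -
  obtain h \<beta> where hb: "convex hull \<Omega> \<subseteq> {x. h \<bullet> x \<le> \<beta>}" and Fe: "F = convex hull \<Omega> \<inter> {x. h \<bullet> x = \<beta>}"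
    using exposed by blast
  define \<rho> where "\<rho> = iota_star \<iota> G"
  have \<rho>: "\<rho> = (\<Sum>a\<in>\<Omega>. pw G a *\<^sub>R a)" by (simp add: \<rho>_def iota_star_P)
  have \<rho>hull: "\<rho> \<in> convex hull \<Omega>" unfolding \<rho>
    by (rule convex_sum[OF finite_weights convex_convex_hull pw_sum[OF G]])
       (auto intro: pw_nonneg[OF G] hull_inc)
  have hle: "h \<bullet> a \<le> \<beta>" if "a \<in> \<Omega>" for a using hb hull_inc[OF that] by blast
  have aF: "a \<in> F \<longleftrightarrow> h \<bullet> a = \<beta>" if "a \<in> \<Omega>" for a using Fe hull_inc[OF that] by blast
  have "\<beta> - h \<bullet> \<rho> = (\<Sum>a\<in>\<Omega>. pw G a * (\<beta> - h \<bullet> a))"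
  proof -
    have "\<beta> = (\<Sum>a\<in>\<Omega>. pw G a * \<beta>)" by (simp add: sum_distrib_right[symmetric] pw_sum[OF G])
    moreover have "h \<bullet> \<rho> = (\<Sum>a\<in>\<Omega>. pw G a * (h \<bullet> a))" by (simp add: \<rho> inner_sum_right)
    ultimately show ?thesis by (simp add: right_diff_distrib sum_subtractf)
  qed
  have nn: "\<forall>a\<in>\<Omega>. 0 \<le> pw G a * (\<beta> - h \<bullet> a)"
    using pw_nonneg[OF G] hle by auto
  have "\<rho> \<in> F \<longleftrightarrow> h \<bullet> \<rho> = \<beta>" using Fe \<rho>hull by blast
  also have "\<dots> \<longleftrightarrow> (\<Sum>a\<in>\<Omega>. pw G a * (\<beta> - h \<bullet> a)) = 0"
    using \<open>\<beta> - h \<bullet> \<rho> = _\<close> by linarith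
  also have "\<dots> \<longleftrightarrow> (\<forall>a\<in>\<Omega>. pw G a * (\<beta> - h \<bullet> a) = 0)"
    by (rule sum_nonneg_eq_0_iff[OF finite_weights]) (use nn in auto)
  also have "\<dots> \<longleftrightarrow> (\<forall>a\<in>\<Omega> - F. pw G a = 0)"
  proof
    assume L: "\<forall>a\<in>\<Omega>. pw G a * (\<beta> - h \<bullet> a) = 0"
    show "\<forall>a\<in>\<Omega> - F. pw G a = 0"
    proof
      fix a assume a: "a \<in> \<Omega> - F"
      then have "\<beta> - h \<bullet> a \<noteq> 0" using aF by auto
      then show "pw G a = 0" using L a by auto
    qed
  next
    assume R: "\<forall>a\<in>\<Omega> - F. pw G a = 0"
    show "\<forall>a\<in>\<Omega>. pw G a * (\<beta> - h \<bullet> a) = 0"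
    proof
      fix a assume a: "a \<in> \<Omega>"
      show "pw G a * (\<beta> - h \<bullet> a) = 0"
      proof (cases "a \<in> F")
        case True then show ?thesis using aF a by simp
      next
        case False then show ?thesis using R a by simp
      qed
    qed
  qed
  finally show ?thesis unfolding \<rho>_def .
qed

lemma core: "density_op G \<Longrightarrow> iota_star \<iota> G \<in> F \<longleftrightarrow> G = Qm ** G ** Qm"
  using star_in_F pw_QGQ by blast

lemma iotaF_mul: "(Pj ** \<iota> v ** cadj Pj) ** (Pj ** \<iota> w ** cadj Pj) = Pj ** (\<iota> v ** \<iota> w) ** cadj Pj"
proof -
  have "(Pj ** \<iota> v ** cadj Pj) ** (Pj ** \<iota> w ** cadj Pj) = Pj ** \<iota> v ** (Qm ** \<iota> w) ** cadj Pj"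
    by (simp add: Qm_def matrix_mul_assoc)
  also have "\<dots> = Pj ** \<iota> v ** (\<iota> w ** Qm) ** cadj Pj" by (simp only: Q_iota)
  also have "\<dots> = Pj ** \<iota> v ** \<iota> w ** (Qm ** cadj Pj)" by (simp add: matrix_mul_assoc)
  also have "\<dots> = Pj ** (\<iota> v ** \<iota> w) ** cadj Pj" by (simp add: Q_Pjadj matrix_mul_assoc)
  finally show ?thesis .
qed

lemma iotaF_linear: "linear (\<lambda>v. Pj ** \<iota> v ** cadj Pj)"
  unfolding linear_iff
  by (simp add: linear_add[OF lin] linear_cmul[OF lin] matrix_add_ldistrib matrix_add_rdistrib
      scaleR_mult_right scalar_matrix_assoc[symmetric])

lemma iotaF_abth: "abth (\<lambda>v. Pj ** \<iota> v ** cadj Pj)"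
proof -
  have l: "linear (\<lambda>v. Pj ** \<iota> v ** cadj Pj)" by (rule iotaF_linear)
  have h: "herm (Pj ** \<iota> v ** cadj Pj)" for v by (rule herm_sandwich[OF herm\<iota>])
  have c: "(Pj ** \<iota> v ** cadj Pj) ** (Pj ** \<iota> w ** cadj Pj) = (Pj ** \<iota> w ** cadj Pj) ** (Pj ** \<iota> v ** cadj Pj)" for v w
    by (simp only: iotaF_mul comm)
  show ?thesis unfolding abth_def using l h c by blast
qed

lemma weights_F: "weights (\<lambda>v. Pj ** \<iota> v ** cadj Pj) = \<Omega> \<inter> F"
proof (intro set_eqI iffI)
  fix a assume "a \<in> weights (\<lambda>v. Pj ** \<iota> v ** cadj Pj)"
  then obtain x where x: "x \<in> weight_space (\<lambda>v. Pj ** \<iota> v ** cadj Pj) a" "x \<noteq> 0"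
    using abth.weights_iff[OF iotaF_abth] by blast
  define \<psi> where "\<psi> = cadj Pj *v x"
  have \<psi>fs: "\<psi> \<in> facet_space \<iota> F" using prange \<psi>_def by blast
  have Pj\<psi>: "Pj *v \<psi> = x" by (simp add: \<psi>_def matrix_vector_mul_assoc coiso)
  then have "\<psi> \<noteq> 0" using x by auto
  have "\<iota> v *v \<psi> = complex_of_real (a \<bullet> v) *s \<psi>" for v
  proof -
    have "\<iota> v *v \<psi> = \<iota> v *v (Qm *v \<psi>)" using Q_fix[OF \<psi>fs] by simp
    also have "\<dots> = (Qm ** \<iota> v) *v \<psi>" by (simp add: matrix_vector_mul_assoc Q_iota)
    also have "\<dots> = cadj Pj *v ((Pj ** \<iota> v ** cadj Pj) *v x)"
      by (simp add: Qm_def \<psi>_def matrix_vector_mul_assoc matrix_mul_assoc)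
    also have "\<dots> = complex_of_real (a \<bullet> v) *s \<psi>"
      using x(1) by (simp add: weight_space_def mv_scaleC \<psi>_def)
    finally show ?thesis .
  qed
  then have "\<psi> \<in> H a" by (simp add: ws_mem)
  then have aO: "a \<in> \<Omega>" using \<open>\<psi> \<noteq> 0\<close> weights_iff by blast
  have "Rm *v \<psi> = \<psi>" using \<psi>fs fs_eq by blast
  then have "a \<in> F" using R_P[OF aO \<open>\<psi> \<in> H a\<close>] \<open>\<psi> \<noteq> 0\<close> by (auto split: if_splits)
  then show "a \<in> \<Omega> \<inter> F" using aO by blast
next
  fix a assume a: "a \<in> \<Omega> \<inter> F"
  then obtain \<psi> where \<psi>: "\<psi> \<in> H a" "\<psi> \<noteq> 0" using weights_iff by blast
  have "\<psi> \<in> facet_space \<iota> F" using R_P[of a \<psi>] a \<psi> fs_eq by auto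
  then have Q\<psi>: "Qm *v \<psi> = \<psi>" by (rule Q_fix)
  define x where "x = Pj *v \<psi>"
  have "cadj Pj *v x = \<psi>" using Q\<psi> by (simp add: x_def Qm_def matrix_vector_mul_assoc)
  then have "x \<noteq> 0" using \<psi> by auto
  have "(Pj ** \<iota> v ** cadj Pj) *v x = complex_of_real (a \<bullet> v) *s x" for v
  proof -
    have "(Pj ** \<iota> v ** cadj Pj) *v x = Pj *v (\<iota> v *v (cadj Pj *v x))"
      by (simp add: matrix_vector_mul_assoc matrix_mul_assoc)
    also have "\<dots> = Pj *v (\<iota> v *v \<psi>)" using \<open>cadj Pj *v x = \<psi>\<close> by simp
    also have "\<dots> = complex_of_real (a \<bullet> v) *s x" using \<psi> by (simp add: ws_mem mv_scaleC x_def)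
    finally show ?thesis .
  qed
  then have "x \<in> weight_space (\<lambda>v. Pj ** \<iota> v ** cadj Pj) a" by (simp add: weight_space_def)
  then show "a \<in> weights (\<lambda>v. Pj ** \<iota> v ** cadj Pj)"
    using \<open>x \<noteq> 0\<close> abth.weights_iff[OF iotaF_abth] by blast
qed

lemma star_lift: "iota_star (\<lambda>v. Pj ** \<iota> v ** cadj Pj) G' = iota_star \<iota> (cadj Pj ** G' ** Pj)"
  by (simp add: iota_star_def trace_conj)

lemma cnorm2_lift: "cnorm2 (cadj Pj *v x) = cnorm2 x"
proof -
  have "cinner (cadj Pj *v x) (cadj Pj *v x) = cinner x (Pj *v (cadj Pj *v x))"
    by (simp add: cinner_adj)
  also have "\<dots> = cinner x x" by (simp add: matrix_vector_mul_assoc coiso)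
  finally show ?thesis by (simp add: cinner_self)
qed

lemma pure_lift: assumes "pure_state G'" shows "pure_state (cadj Pj ** G' ** Pj)"
proof -
  obtain x where x: "cnorm2 x = 1" "G' = ketbra x" using assms by (auto simp: pure_state_def)
  have "cadj Pj ** G' ** Pj = ketbra (cadj Pj *v x)"
    using ketbra_sandwich[of "cadj Pj" x] x(2) by simp
  then show ?thesis using x(1) cnorm2_lift unfolding pure_state_def by metis
qed

lemma trace_lift: "trace (cadj Pj ** G' ** Pj) = trace G'"
proof -
  have "trace (cadj Pj ** G' ** Pj) = trace (cadj Pj ** (G' ** Pj))" by (simp add: matrix_mul_assoc)
  also have "\<dots> = trace ((G' ** Pj) ** cadj Pj)" by (rule trace_mul_sym)
  finally show ?thesis by (simp add: matrix_mul_assoc[symmetric] coiso)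
qed

lemma dens_lift: "density_op G' \<Longrightarrow> density_op (cadj Pj ** G' ** Pj)"
  unfolding density_op_def by (simp add: herm_sandwich' qform_sandwich trace_lift)

lemma lift_QGQ: "Qm ** (cadj Pj ** G' ** Pj) ** Qm = cadj Pj ** G' ** Pj"
proof -
  have "Qm ** (cadj Pj ** G' ** Pj) ** Qm = (Qm ** cadj Pj) ** G' ** (Pj ** Qm)"
    by (simp add: matrix_mul_assoc)
  then show ?thesis by (simp add: Q_Pjadj Pj_Q)
qed

lemma GQ_of_QGQ: assumes e: "G = Qm ** G ** Qm" shows "G ** Qm = G"
proof -
  have "G ** Qm = (Qm ** G ** Qm) ** Qm" using e by (rule arg_cong)
  also have "\<dots> = Qm ** G ** (Qm ** Qm)" by (simp add: matrix_mul_assoc)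
  also have "\<dots> = G" using e by (simp add: Q_idem)
  finally show ?thesis .
qed

lemma trace_down: "trace (Pj ** G ** cadj Pj) = trace (G ** Qm)"
proof -
  have "trace (Pj ** G ** cadj Pj) = trace (Pj ** (G ** cadj Pj))" by (simp add: matrix_mul_assoc)
  also have "\<dots> = trace ((G ** cadj Pj) ** Pj)" by (rule trace_mul_sym)
  finally show ?thesis by (simp add: Qm_def matrix_mul_assoc)
qed

lemma down_lift: "G = Qm ** G ** Qm \<Longrightarrow> cadj Pj ** (Pj ** G ** cadj Pj) ** Pj = G"
  by (simp add: Qm_def matrix_mul_assoc)

lemma dens_iff: assumes G: "density_op G"
  shows "iota_star \<iota> G \<in> F \<longleftrightarrow> (\<exists>G'. G = cadj Pj ** G' ** Pj \<and> density_op G')"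
proof
  assume "iota_star \<iota> G \<in> F"
  then have e: "G = Qm ** G ** Qm" using core[OF G] by blast
  define G' where "G' = Pj ** G ** cadj Pj"
  have "density_op G'"
    using G GQ_of_QGQ[OF e] unfolding density_op_def G'_def
    by (simp add: herm_sandwich trace_down qform_sandwich[of "cadj Pj", simplified])
  then show "\<exists>G'. G = cadj Pj ** G' ** Pj \<and> density_op G'"
    using down_lift[OF e] G'_def by metis
next
  assume "\<exists>G'. G = cadj Pj ** G' ** Pj \<and> density_op G'"
  then obtain G' where "G = cadj Pj ** G' ** Pj" by blast
  then have "G = Qm ** G ** Qm" using lift_QGQ by simp
  then show "iota_star \<iota> G \<in> F" using core[OF G] by blast
qed

lemma pure_iff: assumes G: "pure_state G"
  shows "iota_star \<iota> G \<in> F \<longleftrightarrow> (\<exists>G'. G = cadj Pj ** G' ** Pj \<and> pure_state G')"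
proof
  assume "iota_star \<iota> G \<in> F"
  then have e: "G = Qm ** G ** Qm" using core[OF pure_density[OF G]] by blast
  obtain \<psi> where \<psi>: "cnorm2 \<psi> = 1" "G = ketbra \<psi>" using G by (auto simp: pure_state_def)
  define G' where "G' = Pj ** G ** cadj Pj"
  have G'k: "G' = ketbra (Pj *v \<psi>)" by (simp add: G'_def \<psi>(2) ketbra_sandwich)
  have "complex_of_real (cnorm2 (Pj *v \<psi>)) = trace G'" by (simp add: G'k trace_ketbra1)
  also have "\<dots> = trace G" by (simp add: G'_def trace_down GQ_of_QGQ[OF e])
  also have "\<dots> = 1" by (simp add: \<psi> trace_ketbra1)
  finally have "cnorm2 (Pj *v \<psi>) = 1" by simp
  then have "pure_state G'" using G'k by (auto simp: pure_state_def)
  then show "\<exists>G'. G = cadj Pj ** G' ** Pj \<and> pure_state G'"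
    using down_lift[OF e] G'_def by metis
next
  assume "\<exists>G'. G = cadj Pj ** G' ** Pj \<and> pure_state G'"
  then obtain G' where "G = cadj Pj ** G' ** Pj" by blast
  then have "G = Qm ** G ** Qm" using lift_QGQ by simp
  then show "iota_star \<iota> G \<in> F" using core[OF pure_density[OF G]] by blast
qed

end

lemma dimK:
  fixes S :: "'v::euclidean_space set"
  assumes "S \<noteq> {}"
  shows "int (dim {v. \<exists>c. \<forall>a\<in>S. a \<bullet> v = c}) = int DIM('v) - aff_dim S"
proof -
  obtain s0 where s0: "s0 \<in> S" using assms by blast
  define T0 where "T0 = (\<lambda>x. x - s0) ` S"
  have K: "{v. \<exists>c. \<forall>a\<in>S. a \<bullet> v = c} = {y \<in> UNIV. \<forall>x\<in>span T0. orthogonal x y}"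
  proof (intro set_eqI iffI)
    fix v assume "v \<in> {v. \<exists>c. \<forall>a\<in>S. a \<bullet> v = c}"
    then obtain c where c: "\<And>a. a \<in> S \<Longrightarrow> a \<bullet> v = c" by blast
    have "orthogonal v y" if "y \<in> T0" for y
    proof -
      obtain x where x: "x \<in> S" "y = x - s0" using \<open>y \<in> T0\<close> T0_def by blast
      have "v \<bullet> y = x \<bullet> v - s0 \<bullet> v" by (simp add: x(2) inner_diff_right inner_commute)
      then show ?thesis using c[OF x(1)] c[OF s0] by (simp add: orthogonal_def)
    qed
    then have "orthogonal v x" if "x \<in> span T0" for x
      using orthogonal_to_span[OF that] by blast
    then show "v \<in> {y \<in> UNIV. \<forall>x\<in>span T0. orthogonal x y}"
      by (simp add: orthogonal_commute)
  next
    fix y assume y: "y \<in> {y \<in> UNIV. \<forall>x\<in>span T0. orthogonal x y}"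
    have "a \<bullet> y = s0 \<bullet> y" if "a \<in> S" for a
    proof -
      have "a - s0 \<in> span T0" using that by (auto simp: T0_def intro: span_base)
      then have "orthogonal (a - s0) y" using y by blast
      then show ?thesis by (simp add: orthogonal_def inner_diff_left)
    qed
    then show "y \<in> {v. \<exists>c. \<forall>a\<in>S. a \<bullet> v = c}" by blast
  qed
  have "dim {y \<in> UNIV. \<forall>x\<in>span T0. orthogonal x y} + dim (span T0) = dim (UNIV::'v set)"
    by (rule dim_subspace_orthogonal_to_vectors) (auto simp: subspace_span)
  moreover have "aff_dim S = int (dim T0)"
    unfolding T0_def by (rule aff_dim_eq_dim_subtract[OF hull_inc[OF s0]])
  ultimately show ?thesis using K by (simp add: dim_span dim_UNIV)
qed

context abfacet
begin

lemma Fp_restrict: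
  "Fp (\<lambda>v. Pj ** \<iota> v ** cadj Pj) (Pj ** W ** cadj Pj) = (\<lambda>\<rho>. if \<rho> \<in> F then Fp \<iota> W \<rho> else \<infinity>)"
proof (rule ext)
  fix \<rho> :: 'v
  have val: "trace (G' ** (Pj ** W ** cadj Pj)) = trace ((cadj Pj ** G' ** Pj) ** W)" for G'
    by (simp add: trace_conj)
  let ?A = "{ereal (Re (trace (G ** (Pj ** W ** cadj Pj)))) | G. pure_state G \<and> iota_star (\<lambda>v. Pj ** \<iota> v ** cadj Pj) G = \<rho>}"
  let ?B = "{ereal (Re (trace (G ** W))) | G. pure_state G \<and> iota_star \<iota> G = \<rho>}"
  show "Fp (\<lambda>v. Pj ** \<iota> v ** cadj Pj) (Pj ** W ** cadj Pj) \<rho> = (if \<rho> \<in> F then Fp \<iota> W \<rho> else \<infinity>)"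
  proof (cases "\<rho> \<in> F")
    case True
    have "?A = ?B"
    proof (intro set_eqI iffI)
      fix r assume "r \<in> ?A"
      then obtain G' where G': "pure_state G'" "iota_star (\<lambda>v. Pj ** \<iota> v ** cadj Pj) G' = \<rho>"
        and r: "r = ereal (Re (trace (G' ** (Pj ** W ** cadj Pj))))" by blast
      have "pure_state (cadj Pj ** G' ** Pj)" by (rule pure_lift[OF G'(1)])
      moreover have "iota_star \<iota> (cadj Pj ** G' ** Pj) = \<rho>" using G'(2) by (simp add: star_lift)
      moreover have "r = ereal (Re (trace ((cadj Pj ** G' ** Pj) ** W)))" using r val by simp
      ultimately show "r \<in> ?B" by blast
    next
      fix r assume "r \<in> ?B"
      then obtain G where G: "pure_state G" "iota_star \<iota> G = \<rho>"
        and r: "r = ereal (Re (trace (G ** W)))" by blast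
      obtain G' where G': "G = cadj Pj ** G' ** Pj" "pure_state G'"
        using pure_iff[OF G(1)] G(2) True by blast
      have "iota_star (\<lambda>v. Pj ** \<iota> v ** cadj Pj) G' = \<rho>" using G(2) G'(1) by (simp add: star_lift)
      moreover have "r = ereal (Re (trace (G' ** (Pj ** W ** cadj Pj))))" using r val G'(1) by simp
      ultimately show "r \<in> ?A" using G'(2) by blast
    qed
    then show ?thesis by (simp add: Fp_def True)
  next
    case False
    have "?A = {}"
    proof (rule ccontr)
      assume "?A \<noteq> {}"
      then obtain G' where G': "pure_state G'" "iota_star (\<lambda>v. Pj ** \<iota> v ** cadj Pj) G' = \<rho>" by blast
      have p: "pure_state (cadj Pj ** G' ** Pj)" by (rule pure_lift[OF G'(1)])
      have "iota_star \<iota> (cadj Pj ** G' ** Pj) \<in> F" using pure_iff[OF p] G'(1) by blast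
      then show False using G'(2) False by (simp add: star_lift)
    qed
    then have "Inf ?A = Inf ({}::ereal set)" by (simp only:)
    then have "Inf ?A = (\<infinity>::ereal)" by (simp add: top_ereal_def)
    then show ?thesis using False by (simp only: Fp_def) simp
  qed
qed

lemma Fe_restrict:
  "Fe (\<lambda>v. Pj ** \<iota> v ** cadj Pj) (Pj ** W ** cadj Pj) = (\<lambda>\<rho>. if \<rho> \<in> F then Fe \<iota> W \<rho> else \<infinity>)"
proof (rule ext)
  fix \<rho> :: 'v
  have val: "trace (G' ** (Pj ** W ** cadj Pj)) = trace ((cadj Pj ** G' ** Pj) ** W)" for G'
    by (simp add: trace_conj)
  let ?A = "{ereal (Re (trace (G ** (Pj ** W ** cadj Pj)))) | G. density_op G \<and> iota_star (\<lambda>v. Pj ** \<iota> v ** cadj Pj) G = \<rho>}"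
  let ?B = "{ereal (Re (trace (G ** W))) | G. density_op G \<and> iota_star \<iota> G = \<rho>}"
  show "Fe (\<lambda>v. Pj ** \<iota> v ** cadj Pj) (Pj ** W ** cadj Pj) \<rho> = (if \<rho> \<in> F then Fe \<iota> W \<rho> else \<infinity>)"
  proof (cases "\<rho> \<in> F")
    case True
    have "?A = ?B"
    proof (intro set_eqI iffI)
      fix r assume "r \<in> ?A"
      then obtain G' where G': "density_op G'" "iota_star (\<lambda>v. Pj ** \<iota> v ** cadj Pj) G' = \<rho>"
        and r: "r = ereal (Re (trace (G' ** (Pj ** W ** cadj Pj))))" by blast
      have "density_op (cadj Pj ** G' ** Pj)" by (rule dens_lift[OF G'(1)])
      moreover have "iota_star \<iota> (cadj Pj ** G' ** Pj) = \<rho>" using G'(2) by (simp add: star_lift)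
      moreover have "r = ereal (Re (trace ((cadj Pj ** G' ** Pj) ** W)))" using r val by simp
      ultimately show "r \<in> ?B" by blast
    next
      fix r assume "r \<in> ?B"
      then obtain G where G: "density_op G" "iota_star \<iota> G = \<rho>"
        and r: "r = ereal (Re (trace (G ** W)))" by blast
      obtain G' where G': "G = cadj Pj ** G' ** Pj" "density_op G'"
        using dens_iff[OF G(1)] G(2) True by blast
      have "iota_star (\<lambda>v. Pj ** \<iota> v ** cadj Pj) G' = \<rho>" using G(2) G'(1) by (simp add: star_lift)
      moreover have "r = ereal (Re (trace (G' ** (Pj ** W ** cadj Pj))))" using r val G'(1) by simp
      ultimately show "r \<in> ?A" using G'(2) by blast
    qed
    then show ?thesis by (simp add: Fe_def True)
  next
    case False
    have "?A = {}"
    proof (rule ccontr)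
      assume "?A \<noteq> {}"
      then obtain G' where G': "density_op G'" "iota_star (\<lambda>v. Pj ** \<iota> v ** cadj Pj) G' = \<rho>" by blast
      have p: "density_op (cadj Pj ** G' ** Pj)" by (rule dens_lift[OF G'(1)])
      have "iota_star \<iota> (cadj Pj ** G' ** Pj) \<in> F" using dens_iff[OF p] G'(1) by blast
      then show False using G'(2) False by (simp add: star_lift)
    qed
    then have "Inf ?A = Inf ({}::ereal set)" by (simp only:)
    then have "Inf ?A = (\<infinity>::ereal)" by (simp add: top_ereal_def)
    then show ?thesis using False by (simp only: Fe_def) simp
  qed
qed

lemma dim_restrict:
  "dim ((\<lambda>v. Pj ** \<iota> v ** cadj Pj) -` span {mat 1}) = dim (\<iota> -` span {mat 1}) + 1"
proof -
  have "int (dim ((\<lambda>v. Pj ** \<iota> v ** cadj Pj) -` span {mat 1})) = int DIM('v) - aff_dim (\<Omega> \<inter> F)"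
    using abth.iota_scalar[OF iotaF_abth] weights_F dimK[OF OF_nonempty] by simp
  also have "\<dots> = int DIM('v) - aff_dim \<Omega> + 1" by (simp add: aff_dim_OF)
  also have "\<dots> = int (dim (\<iota> -` span {mat 1})) + 1"
    using iota_scalar dimK[OF weights_nonempty] by simp
  finally show ?thesis by simp
qed

end

theorem proposition4p11:
  fixes \<iota> :: "'v::euclidean_space \<Rightarrow> complex^'n^'n"
    and W :: "complex^'n^'n"
    and F :: "'v set"
    and Pj :: "complex^'n^'m"
  assumes thy: "functional_theory \<iota> W"
    and ab: "abelian \<iota>"
    and facet: "F facet_of convex hull (weights \<iota>)"
    and Pi_coiso: "Pj ** cadj Pj = mat 1"
    and Pi_range: "range (\<lambda>x. cadj Pj *v x) = facet_space \<iota> F"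
  defines "\<iota>F \<equiv> (\<lambda>v. Pj ** \<iota> v ** cadj Pj)"
    and "WF \<equiv> Pj ** W ** cadj Pj"
    and "PF \<equiv> {cadj Pj ** G ** Pj | G. pure_state G}"
    and "EF \<equiv> {cadj Pj ** G ** Pj | G. density_op G}"
  shows "functional_theory \<iota>F WF
    \<and> abelian \<iota>F
    \<and> weights \<iota>F = weights \<iota> \<inter> F
    \<and> dim (\<iota>F -` span {mat 1}) = dim (\<iota> -` span {mat 1}) + 1
    \<and> (\<forall>G. pure_state G \<longrightarrow> (iota_star \<iota> G \<in> F \<longleftrightarrow> G \<in> PF))
    \<and> (\<forall>G. density_op G \<longrightarrow> (iota_star \<iota> G \<in> F \<longleftrightarrow> G \<in> EF))
    \<and> Fp \<iota>F WF = (\<lambda>\<rho>. if \<rho> \<in> F then Fp \<iota> W \<rho> else \<infinity>)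
    \<and> Fe \<iota>F WF = (\<lambda>\<rho>. if \<rho> \<in> F then Fe \<iota> W \<rho> else \<infinity>)"
proof -
  have A: "abth \<iota>" using thy ab by (auto simp: abth_def functional_theory_def abelian_def)
  have B: "abfacet \<iota> F Pj"
    unfolding abfacet_def abfacet_axioms_def using A facet Pi_coiso Pi_range by blast
  have hW: "herm W" using thy by (simp add: functional_theory_def)
  have AF: "abth \<iota>F" unfolding \<iota>F_def by (rule abfacet.iotaF_abth[OF B])
  have c1: "functional_theory \<iota>F WF"
    using AF hW unfolding functional_theory_def WF_def abth_def by (auto intro: herm_sandwich)
  have c2: "abelian \<iota>F" using AF unfolding abelian_def abth_def by blast
  have c3: "weights \<iota>F = weights \<iota> \<inter> F" unfolding \<iota>F_def by (rule abfacet.weights_F[OF B])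
  have c4: "dim (\<iota>F -` span {mat 1}) = dim (\<iota> -` span {mat 1}) + 1"
    unfolding \<iota>F_def by (rule abfacet.dim_restrict[OF B])
  have c5: "\<forall>G. pure_state G \<longrightarrow> (iota_star \<iota> G \<in> F \<longleftrightarrow> G \<in> PF)"
    unfolding PF_def using abfacet.pure_iff[OF B] by blast
  have c6: "\<forall>G. density_op G \<longrightarrow> (iota_star \<iota> G \<in> F \<longleftrightarrow> G \<in> EF)"
    unfolding EF_def using abfacet.dens_iff[OF B] by blast
  have c7: "Fp \<iota>F WF = (\<lambda>\<rho>. if \<rho> \<in> F then Fp \<iota> W \<rho> else \<infinity>)"
    unfolding \<iota>F_def WF_def by (rule abfacet.Fp_restrict[OF B])
  have c8: "Fe \<iota>F WF = (\<lambda>\<rho>. if \<rho> \<in> F then Fe \<iota> W \<rho> else \<infinity>)"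
    unfolding \<iota>F_def WF_def by (rule abfacet.Fe_restrict[OF B])
  show ?thesis using c1 c2 c3 c4 c5 c6 c7 c8 by blast
qed


end
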